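(* Let $H$ be an infinite-dimensional real Hilbert space. Then for every integer $m\ge1$ and every $\alpha\in(0,1]$, $$\tfrac12 m^{-\alpha/2}\le \gamma^o_m(\alpha,H)\le m^{-\alpha/2}.$$
   Context: A (symmetric) dictionary in $H$ is a set $\mathcal D$ of unit vectors with dense span and $g\in\mathcal D\Rightarrow -g\in\mathcal D$. $A_1(\mathcal D)$ is the closed convex hull of $\mathcal D$ and $\|f\|_{A_1(\mathcal D)}:=\inf\{M:f/M\in A_1(\mathcal D)\}$. Orthogonal Greedy Algorithm (OGA): for $h\in H$ let $g(h)\in\mathcal D$ maximize $\langle h,g\rangle$ over $\mathcal D$ (assumed to exist); $f^o_0:=f$, $G^o_0:=0$, and for $m\ge1$, $G^o_m(f,\mathcal D)$ is the orthogonal projection of $f$ onto $\operatorname{span}\{g(f^o_0),\dots,g(f^o_{m-1})\}$ and $f^o_m:=f-G^o_m(f,\mathcal D)$. For $\alpha\in(0,1]$, $$\gamma^o_m(\alpha,H):=\sup\frac{\|f-G^o_m(f,\mathcal D)\|}{\|f\|^{1-\alpha}\|f\|_{A_1(\mathcal D)}^{\alpha}},$$ supremum over all dictionaries $\mathcal D$, all $f\ne0$ with $\|f\|_{A_1(\mathcal D)}<\infty$, and all possible realizations of the OGA. *)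

theory Defs
  imports "HOL-Analysis.Analysis"
begin

definition dictionary :: "'a::real_inner set \<Rightarrow> bool" where
  "dictionary D \<longleftrightarrow> (\<forall>g\<in>D. norm g = 1) \<and> closure (span D) = UNIV \<and> (\<forall>g\<in>D. - g \<in> D)"

definition A1 :: "'a::real_inner set \<Rightarrow> 'a set" where
  "A1 D = closure (convex hull D)"

text \<open>Gauge norm of A_1(D), as an extended real (infinite if no admissible M exists).\<close>
definition A1_norm :: "'a::real_inner set \<Rightarrow> 'a \<Rightarrow> ereal" where
  "A1_norm D f = Inf (ereal ` {M. M > 0 \<and> f /\<^sub>R M \<in> A1 D})"

definition orth_proj :: "'a::real_inner set \<Rightarrow> 'a \<Rightarrow> 'a" where
  "orth_proj S f = (THE p. p \<in> S \<and> (\<forall>v\<in>S. inner (f - p) v = 0))"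

definition OGA_approx :: "'a::real_inner \<Rightarrow> (nat \<Rightarrow> 'a) \<Rightarrow> nat \<Rightarrow> 'a" where
  "OGA_approx f g k = orth_proj (span (g ` {..<k})) f"

definition OGA_realization :: "'a::real_inner set \<Rightarrow> 'a \<Rightarrow> nat \<Rightarrow> (nat \<Rightarrow> 'a) \<Rightarrow> bool" where
  "OGA_realization D f m g \<longleftrightarrow>
     (\<forall>k<m. g k \<in> D \<and> (\<forall>h\<in>D. inner (f - OGA_approx f g k) h \<le> inner (f - OGA_approx f g k) (g k)))"

definition gamma_o :: "nat \<Rightarrow> real \<Rightarrow> 'a::{real_inner,complete_space} itself \<Rightarrow> ereal" where
  "gamma_o m \<alpha> _ = Sup {ereal (norm (f - OGA_approx f g m) /
        (norm f powr (1 - \<alpha>) * real_of_ereal (A1_norm D f) powr \<alpha>)) | D f g.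
        dictionary D \<and> (f::'a) \<noteq> 0 \<and> A1_norm D f < \<infinity> \<and> OGA_realization D f m g}"

end

theory Submission
  imports Defs
begin


lemma orth_span:
  assumes "a \<in> span S" "\<And>y. y \<in> S \<Longrightarrow> inner x y = 0"
  shows "inner x a = 0"
  using orthogonal_to_span[of a S x] assms unfolding orthogonal_def by blast

lemma proj_exists:
  fixes f :: "'a::real_inner"
  assumes "finite S"
  shows "\<exists>p\<in>span S. \<forall>v\<in>S. inner (f - p) v = 0"
  using assms
proof (induction S arbitrary: f rule: finite_induct)
  case empty
  then show ?case by (auto intro: span_zero)
next
  case (insert a S)
  obtain p where p: "p \<in> span S" "\<forall>v\<in>S. inner (f - p) v = 0"
    using insert.IH by blast
  obtain q where q: "q \<in> span S" "\<forall>v\<in>S. inner (a - q) v = 0"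
    using insert.IH by blast
  define r where "r = a - q"
  have rS: "inner r v = 0" if "v \<in> span S" for v
    using orth_span[OF that] q(2) r_def by blast
  have pr: "inner p r = 0" using rS[OF p(1)] by (simp add: inner_commute)
  have fpS: "inner (f - p) v = 0" if "v \<in> span S" for v
    using orth_span[OF that] p(2) by blast
  have rspan: "r \<in> span (insert a S)" unfolding r_def
    by (meson q(1) span_base span_diff span_mono subset_insertI insertI1 subsetD)
  have pspan: "p \<in> span (insert a S)" by (meson p(1) span_mono subset_insertI subsetD)
  show ?case
  proof (cases "r = 0")
    case True
    then have "a = q" by (simp add: r_def)
    then show ?thesis using p pspan fpS q(1) by auto
  next
    case False
    define c where "c = inner f r / inner r r"
    have rr: "inner r r \<noteq> 0" using False by simp
    have o1: "inner (f - (p + c *\<^sub>R r)) v = 0" if "v \<in> S" for v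
    proof -
      have "inner (f - (p + c *\<^sub>R r)) v = inner (f - p) v - c * inner r v"
        by (simp add: algebra_simps inner_diff_left inner_add_left)
      then show ?thesis using fpS[OF span_base[OF that]] rS[OF span_base[OF that]] by simp
    qed
    have o2: "inner (f - (p + c *\<^sub>R r)) r = 0"
    proof -
      have "inner (f - (p + c *\<^sub>R r)) r = inner f r - inner p r - c * inner r r"
        by (simp add: algebra_simps inner_diff_left inner_add_left)
      also have "\<dots> = 0" using rr pr by (simp add: c_def)
      finally show ?thesis .
    qed
    have o3: "inner (f - (p + c *\<^sub>R r)) q = 0"
    proof -
      have "inner (f - p) q = 0" using fpS[OF q(1)] .
      moreover have "inner r q = 0" using rS[OF q(1)] by (simp add: inner_commute)
      ultimately show ?thesis using o1 pr
        by (simp add: inner_diff_left inner_add_left)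
    qed
    have o4: "inner (f - (p + c *\<^sub>R r)) a = 0"
    proof -
      have "a = r + q" by (simp add: r_def)
      then show ?thesis using o2 o3 by (simp add: inner_add_right)
    qed
    show ?thesis
      apply (rule bexI[of _ "p + c *\<^sub>R r"])
      using o1 o4 apply auto[1]
      by (simp add: pspan rspan span_add span_scale)
  qed
qed

lemma proj_unique:
  fixes f :: "'a::real_inner"
  assumes "p \<in> span S" "\<forall>v\<in>S. inner (f - p) v = 0"
    "p' \<in> span S" "\<forall>v\<in>S. inner (f - p') v = 0"
  shows "p = p'"
proof -
  have "inner (f - p) (p - p') = 0" using orth_span[of "p - p'" S "f - p"] assms span_diff by blast
  moreover have "inner (f - p') (p - p') = 0" using orth_span[of "p - p'" S "f - p'"] assms span_diff by blast
  ultimately have "inner (p' - p) (p - p') = 0" by (simp add: inner_diff_left inner_diff_right algebra_simps)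
  then have "inner (p - p') (p - p') = 0" by (simp add: inner_diff_left inner_diff_right algebra_simps)
  then show ?thesis by simp
qed

lemma orth_proj_char:
  fixes f :: "'a::real_inner"
  assumes "finite S"
  shows "orth_proj (span S) f \<in> span S \<and> (\<forall>v\<in>span S. inner (f - orth_proj (span S) f) v = 0)"
proof -
  obtain p where p: "p \<in> span S" "\<forall>v\<in>S. inner (f - p) v = 0" using proj_exists[OF assms] by blast
  have P: "p \<in> span S \<and> (\<forall>v\<in>span S. inner (f - p) v = 0)"
    using p orth_span by blast
  have "orth_proj (span S) f = p"
    unfolding orth_proj_def
  proof (rule the_equality)
    show "p \<in> span S \<and> (\<forall>v\<in>span S. inner (f - p) v = 0)" by (rule P)
  next
    fix p' assume "p' \<in> span S \<and> (\<forall>v\<in>span S. inner (f - p') v = 0)"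
    then show "p' = p" using proj_unique[of p' S f p] P span_base by blast
  qed
  then show ?thesis using P by simp
qed

lemma orth_proj_eq:
  fixes f :: "'a::real_inner"
  assumes "finite S" "p \<in> span S" "\<forall>v\<in>S. inner (f - p) v = 0"
  shows "orth_proj (span S) f = p"
  using orth_proj_char[OF assms(1), of f] proj_unique[of _ S f p] assms span_base by blast

lemma orth_proj_min:
  fixes f :: "'a::real_inner"
  assumes "finite S" "q \<in> span S"
  shows "norm (f - orth_proj (span S) f) \<le> norm (f - q)"
proof -
  let ?p = "orth_proj (span S) f"
  have c: "?p \<in> span S" "\<forall>v\<in>span S. inner (f - ?p) v = 0" using orth_proj_char[OF assms(1)] by auto
  have "?p - q \<in> span S" using c(1) assms(2) span_diff by blast
  then have o: "inner (f - ?p) (?p - q) = 0" using c(2) by blast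
  have "f - q = (f - ?p) + (?p - q)" by simp
  then have "(norm (f - q))\<^sup>2 = (norm (f - ?p))\<^sup>2 + (norm (?p - q))\<^sup>2"
    using o by (metis norm_add_Pythagorean orthogonal_def)
  then have "(norm (f - ?p))\<^sup>2 \<le> (norm (f - q))\<^sup>2" by simp
  then show ?thesis using power2_le_imp_le by fastforce
qed



lemma seq_bound:
  fixes a :: "nat \<Rightarrow> real"
  assumes B: "B > 0" and a0: "a 0 \<le> B" and nn: "\<And>k. k \<le> m \<Longrightarrow> 0 \<le> a k"
    and step: "\<And>k. k < m \<Longrightarrow> a (Suc k) \<le> a k - (a k)\<^sup>2 / B"
  shows "k \<le> m \<Longrightarrow> a k \<le> B / (real k + 1)"
proof (induction k)
  case 0
  then show ?case using a0 by simp
next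
  case (Suc k)
  then have ih: "a k \<le> B / (real k + 1)" and st: "a (Suc k) \<le> a k - (a k)\<^sup>2 / B"
    and ak: "0 \<le> a k" using step nn by auto
  show ?case
  proof (cases "a k \<le> B / (real k + 2)")
    case True
    have "a (Suc k) \<le> a k" using st by (smt (verit) B divide_nonneg_pos zero_le_power2)
    moreover have "real (Suc k) + 1 = real k + 2" by simp
    ultimately show ?thesis using True by (metis order_trans)
  next
    case False
    have "a k - (a k)\<^sup>2 / B = a k * (1 - a k / B)" using B by (simp add: power2_eq_square field_simps)
    also have "\<dots> \<le> (B / (real k + 1)) * (1 - 1 / (real k + 2))"
    proof (rule mult_mono)
      show "1 - a k / B \<le> 1 - 1 / (real k + 2)"
        using False B by (simp add: field_simps)
      have "B / (real k + 1) \<le> B" using B by (simp add: divide_le_eq)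
      then have "a k \<le> B" using ih by linarith
      then show "0 \<le> 1 - a k / B" using B by simp
    qed (use ih ak B in auto)
    also have "\<dots> = B / (real (Suc k) + 1)"
    proof -
      have e: "(1::real) - 1 / (real k + 2) = (real k + 1) / (real k + 2)" by (simp add: field_simps)
      have p1: "real k + 1 \<noteq> 0" "real k + 2 \<noteq> 0" by linarith+
      have "B / (real k + 1) * ((real k + 1) / (real k + 2)) = B / (real k + 2)"
      proof -
        have "B / (real k + 1) * ((real k + 1) / (real k + 2)) = (B * (real k + 1)) / ((real k + 2) * (real k + 1))"
          by (simp add: mult.commute)
        also have "\<dots> = B / (real k + 2)" using p1 by (rule_tac mult_divide_mult_cancel_right) 
        finally show ?thesis .
      qed
      then show ?thesis unfolding e by (simp add: add.commute)
    qed
    finally show ?thesis using st by simp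
  qed
qed

lemma A1_cball:
  assumes "dictionary D"
  shows "A1 D \<subseteq> cball 0 1"
proof -
  have "D \<subseteq> cball 0 1" using assms unfolding dictionary_def by auto
  then have "convex hull D \<subseteq> cball 0 1" by (simp add: convex_hull_subset hull_minimal)
  then show ?thesis unfolding A1_def by (simp add: closure_minimal)
qed

lemma A1_half:
  assumes "\<forall>h\<in>D. inner r h \<le> t" "x \<in> A1 D"
  shows "inner r x \<le> t"
proof -
  have "D \<subseteq> {x. inner r x \<le> t}" using assms by auto
  then have "convex hull D \<subseteq> {x. inner r x \<le> t}"
    by (simp add: convex_halfspace_le hull_minimal)
  then have "closure (convex hull D) \<subseteq> {x. inner r x \<le> t}"
    by (simp add: closure_minimal closed_halfspace_le)
  then show ?thesis using assms(2) unfolding A1_def by auto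
qed

lemma upper_one:
  fixes f :: "'a::real_inner"
  assumes D: "dictionary D" and R: "OGA_realization D f m g" and M: "M > 0"
    and fM: "f /\<^sub>R M \<in> A1 D" and m: "m \<ge> 1" and al: "0 < \<alpha>" "\<alpha> \<le> 1"
  shows "norm (f - OGA_approx f g m) \<le> norm f powr (1 - \<alpha>) * M powr \<alpha> * real m powr (-\<alpha>/2)"
proof -
  define r where "r k = f - OGA_approx f g k" for k
  define a where "a k = (norm (r k))\<^sup>2" for k
  have fin: "finite (g ` {..<k})" for k by simp
  have rf: "inner (r k) f = a k" for k
  proof -
    have "inner (r k) (OGA_approx f g k) = 0"
      using orth_proj_char[OF fin[of k], of f] unfolding r_def OGA_approx_def by blast
    then have "inner (r k) f = inner (r k) (r k)"
      by (simp add: r_def inner_diff_right)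
    then show ?thesis by (simp add: a_def power2_norm_eq_inner)
  qed
  have step: "a (Suc k) \<le> a k - (a k)\<^sup>2 / M\<^sup>2" if k: "k < m" for k
  proof -
    define t where "t = inner (r k) (g k)"
    have gD: "g k \<in> D" and gr: "\<forall>h\<in>D. inner (r k) h \<le> t"
      using R k unfolding OGA_realization_def r_def t_def by auto
    have gn: "norm (g k) = 1" using D gD unfolding dictionary_def by auto
    have "inner (r k) (f /\<^sub>R M) \<le> t" using A1_half[OF gr fM] .
    then have tl: "a k / M \<le> t" using rf by (simp add: divide_inverse mult.commute)
    have ak: "0 \<le> a k" by (simp add: a_def)
    have "OGA_approx f g k + t *\<^sub>R g k \<in> span (g ` {..<Suc k})"
    proof -
      have "OGA_approx f g k \<in> span (g ` {..<k})"
        using orth_proj_char[OF fin] unfolding OGA_approx_def by blast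
      then have "OGA_approx f g k \<in> span (g ` {..<Suc k})"
        by (metis (no_types, lifting) image_mono lessThan_subset_iff le_SucI order_refl span_mono subsetD)
      moreover have "g k \<in> span (g ` {..<Suc k})" by (simp add: span_base)
      ultimately show ?thesis by (simp add: span_add span_scale)
    qed
    then have "norm (r (Suc k)) \<le> norm (f - (OGA_approx f g k + t *\<^sub>R g k))"
      unfolding r_def OGA_approx_def by (rule orth_proj_min[OF fin])
    also have "f - (OGA_approx f g k + t *\<^sub>R g k) = r k - t *\<^sub>R g k" by (simp add: r_def)
    finally have n1: "norm (r (Suc k)) \<le> norm (r k - t *\<^sub>R g k)" .
    have gg: "inner (g k) (g k) = 1" using gn by (simp add: norm_eq_sqrt_inner)
    have gr': "inner (g k) (r k) = t" unfolding t_def by (rule inner_commute)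
    have "(norm (r k - t *\<^sub>R g k))\<^sup>2 = inner (r k - t *\<^sub>R g k) (r k - t *\<^sub>R g k)"
      by (rule power2_norm_eq_inner)
    also have "\<dots> = inner (r k) (r k) - t * inner (r k) (g k) - t * inner (g k) (r k) + t * t * inner (g k) (g k)"
      by (simp add: inner_diff_left inner_diff_right algebra_simps)
    also have "\<dots> = a k - t\<^sup>2"
    proof -
      have "inner (r k) (r k) = a k" by (simp add: a_def power2_norm_eq_inner)
      then show ?thesis unfolding gg gr' t_def[symmetric] by (simp add: power2_eq_square)
    qed
    finally have e2: "(norm (r k - t *\<^sub>R g k))\<^sup>2 = a k - t\<^sup>2" .
    have "(norm (r (Suc k)))\<^sup>2 \<le> (norm (r k - t *\<^sub>R g k))\<^sup>2"
      using n1 norm_ge_zero by (rule power_mono)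
    then have "a (Suc k) \<le> a k - t\<^sup>2" unfolding a_def e2[unfolded a_def] .
    moreover have "(a k / M)\<^sup>2 \<le> t\<^sup>2" using tl ak M by (intro power_mono) auto
    ultimately show ?thesis by (simp add: power_divide)
  qed
  have fn: "norm f \<le> M"
  proof -
    have "norm (f /\<^sub>R M) \<le> 1" using A1_cball[OF D] fM by auto
    then show ?thesis using M by (simp add: field_simps)
  qed
  have a0: "a 0 \<le> M\<^sup>2" unfolding a_def r_def OGA_approx_def
  proof -
    have "orth_proj (span (g ` {..<0})) f = 0" by (rule orth_proj_eq) auto
    then show "(norm (f - orth_proj (span (g ` {..<0})) f))\<^sup>2 \<le> M\<^sup>2" using fn
      by (simp add: power_mono)
  qed
  have am: "a m \<le> M\<^sup>2 / (real m + 1)"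
    by (rule seq_bound[of "M\<^sup>2" a m]) (use M a0 step in \<open>auto simp: a_def\<close>)
  have dec: "k \<le> m \<Longrightarrow> a k \<le> a 0" for k
  proof (induction k)
    case (Suc k)
    moreover have "(a k)\<^sup>2 / M\<^sup>2 \<ge> 0" by simp
    ultimately have "a (Suc k) \<le> a k" using step[of k] by linarith
    then show ?case using Suc by simp
  qed simp
  have x1: "norm (r m) \<le> norm f"
  proof -
    have "a m \<le> a 0" using dec by simp
    moreover have "r 0 = f" unfolding r_def OGA_approx_def
      using orth_proj_eq[of "g ` {..<0}" 0 f] by auto
    ultimately have "(norm (r m))\<^sup>2 \<le> (norm f)\<^sup>2" unfolding a_def by simp
    then show ?thesis by (rule power2_le_imp_le) simp
  qed
  have x2: "norm (r m) \<le> M / sqrt (real m)"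
  proof -
    have mp: "0 < real m" using m by simp
    have "M\<^sup>2 / (real m + 1) \<le> M\<^sup>2 / real m"
      using mp by (intro divide_left_mono) auto
    then have "a m \<le> M\<^sup>2 / real m" using am by linarith
    also have "\<dots> = (M / sqrt (real m))\<^sup>2" using m by (simp add: power_divide)
    finally have "(norm (r m))\<^sup>2 \<le> (M / sqrt (real m))\<^sup>2" unfolding a_def .
    then show ?thesis by (rule power2_le_imp_le) (use M in simp)
  qed
  have EQ: "(M / sqrt (real m)) powr \<alpha> = M powr \<alpha> * real m powr (-\<alpha>/2)"
  proof -
    have mp: "0 < real m" using m by simp
    have h1: "(M / sqrt (real m)) powr \<alpha> = M powr \<alpha> / sqrt (real m) powr \<alpha>"
      using M mp by (intro powr_divide)
    have e: "sqrt (real m) = real m powr (1/2)" using mp by (simp add: powr_half_sqrt)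
    have h2: "sqrt (real m) powr \<alpha> = real m powr (1/2 * \<alpha>)"
      unfolding e by (rule powr_powr)
    have ee: "-\<alpha>/2 = - (1/2 * \<alpha>)" by simp
    have h3: "real m powr (-\<alpha>/2) = inverse (real m powr (1/2 * \<alpha>))"
      unfolding ee by (rule powr_minus)
    show ?thesis unfolding h1 h2 h3 by (rule divide_inverse)
  qed
  define x where "x = norm (r m)"
  have x0: "0 \<le> x" by (simp add: x_def)
  have "x = x powr (1 - \<alpha>) * x powr \<alpha>"
  proof (cases "x = 0")
    case True then show ?thesis by simp
  next
    case False
    then have "x powr (1 - \<alpha>) * x powr \<alpha> = x powr (1 - \<alpha> + \<alpha>)" by (simp only: powr_add)
    also have "\<dots> = x" using False x0 by simp
    finally show ?thesis by simp
  qed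
  also have "\<dots> \<le> norm f powr (1 - \<alpha>) * (M / sqrt (real m)) powr \<alpha>"
  proof (rule mult_mono)
    show "x powr (1 - \<alpha>) \<le> norm f powr (1 - \<alpha>)" using x1 x0 al by (intro powr_mono2) (auto simp: x_def)
    show "x powr \<alpha> \<le> (M / sqrt (real m)) powr \<alpha>" using x2 x0 al by (intro powr_mono2) (auto simp: x_def)
  qed auto
  finally have "x \<le> norm f powr (1 - \<alpha>) * (M / sqrt (real m)) powr \<alpha>" .
  then show ?thesis unfolding x_def r_def EQ by (simp only: mult.assoc)
qed



lemma orthonormal_exists:
  assumes inf: "\<not> (\<exists>S::('a::real_inner) set. finite S \<and> span S = UNIV)"
  shows "\<exists>e::nat \<Rightarrow> 'a. (\<forall>i<n. norm (e i) = 1) \<and> (\<forall>i<n. \<forall>j<n. i \<noteq> j \<longrightarrow> inner (e i) (e j) = 0)"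
proof (induction n)
  case 0
  then show ?case by auto
next
  case (Suc n)
  then obtain e :: "nat \<Rightarrow> 'a" where e: "\<forall>i<n. norm (e i) = 1" "\<forall>i<n. \<forall>j<n. i \<noteq> j \<longrightarrow> inner (e i) (e j) = 0"
    by blast
  have fin: "finite (e ` {..<n})" by simp
  have "\<not> (finite (e ` {..<n}) \<and> span (e ` {..<n}) = UNIV)" using inf by (rule contrapos_nn) (rule exI)
  then have "span (e ` {..<n}) \<noteq> UNIV" using fin by simp
  then obtain x where x: "x \<notin> span (e ` {..<n})" by auto
  define q where "q = orth_proj (span (e ` {..<n})) x"
  have q: "q \<in> span (e ` {..<n})" "\<forall>v\<in>span (e ` {..<n}). inner (x - q) v = 0"
    using orth_proj_char[OF fin, of x] unfolding q_def by auto
  define y where "y = x - q"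
  have y0: "y \<noteq> 0"
  proof
    assume "y = 0"
    then have "x = q" by (simp add: y_def)
    then show False using x q(1) by simp
  qed
  have yo: "inner y (e i) = 0" if "i < n" for i
  proof -
    have "e i \<in> span (e ` {..<n})" using that by (intro span_base) auto
    then show ?thesis using q(2) by (simp add: y_def)
  qed
  define e' where "e' = e(n := y /\<^sub>R norm y)"
  have en: "e' n = y /\<^sub>R norm y" and ei: "\<And>i. i < n \<Longrightarrow> e' i = e i" by (auto simp: e'_def)
  have "norm (e' i) = 1" if "i < Suc n" for i
  proof (cases "i = n")
    case True then show ?thesis using en y0 by simp
  next
    case False then have "i < n" using that by simp
    then show ?thesis using ei e(1) by simp
  qed
  moreover have "inner (e' i) (e' j) = 0" if "i < Suc n" "j < Suc n" "i \<noteq> j" for i j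
  proof (cases "i = n")
    case True
    then have "j < n" using that by simp
    then show ?thesis using True en ei yo by simp
  next
    case False then have i: "i < n" using that by simp
    show ?thesis
    proof (cases "j = n")
      case True
      have "inner (e i) y = 0" using yo[OF i] by (simp add: inner_commute)
      then show ?thesis using True en ei[OF i] by simp
    next
      case False then have "j < n" using that by simp
      then show ?thesis using i ei e(2) that(3) by simp
    qed
  qed
  ultimately show ?case by blast
qed

lemma sum_inner_e:
  fixes e :: "nat \<Rightarrow> 'a::real_inner"
  assumes on: "\<forall>i<n. norm (e i) = 1" "\<forall>i<n. \<forall>j<n. i \<noteq> j \<longrightarrow> inner (e i) (e j) = 0"
    and I: "I \<subseteq> {..<n}" and j: "j < n"
  shows "inner (\<Sum>i\<in>I. e i) (e j) = (if j \<in> I then 1 else 0)"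
proof -
  have fI: "finite I" using I finite_subset by blast
  have "inner (\<Sum>i\<in>I. e i) (e j) = (\<Sum>i\<in>I. inner (e i) (e j))" by (simp add: inner_sum_left)
  also have "\<dots> = (\<Sum>i\<in>I. if i = j then 1 else 0)"
  proof (rule sum.cong)
    fix i assume "i \<in> I"
    then have i: "i < n" using I by auto
    show "inner (e i) (e j) = (if i = j then 1 else 0)"
    proof (cases "i = j")
      case True
      then have "inner (e i) (e i) = (norm (e i))\<^sup>2" by (simp add: power2_norm_eq_inner)
      then show ?thesis using True on(1) i by simp
    next
      case False then show ?thesis using on(2) i j by simp
    qed
  qed simp
  also have "\<dots> = (if j \<in> I then 1 else 0)" using fI by (simp add: sum.delta')
  finally show ?thesis .
qed

lemma norm_sum_e:
  fixes e :: "nat \<Rightarrow> 'a::real_inner"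
  assumes on: "\<forall>i<n. norm (e i) = 1" "\<forall>i<n. \<forall>j<n. i \<noteq> j \<longrightarrow> inner (e i) (e j) = 0"
    and I: "I \<subseteq> {..<n}"
  shows "norm (\<Sum>i\<in>I. e i) = sqrt (real (card I))"
proof -
  have "(norm (\<Sum>i\<in>I. e i))\<^sup>2 = inner (\<Sum>i\<in>I. e i) (\<Sum>i\<in>I. e i)" by (rule power2_norm_eq_inner)
  also have "\<dots> = (\<Sum>j\<in>I. inner (\<Sum>i\<in>I. e i) (e j))" by (simp add: inner_sum_right)
  also have "\<dots> = (\<Sum>j\<in>I. 1)"
    by (rule sum.cong) (use sum_inner_e[OF on I] I in auto)
  also have "\<dots> = real (card I)" by simp
  finally show ?thesis by (metis norm_ge_zero real_sqrt_unique)
qed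



lemma lower_example:
  fixes e :: "nat \<Rightarrow> 'a::real_inner"
  assumes on: "\<forall>i<n. norm (e i) = 1" "\<forall>i<n. \<forall>j<n. i \<noteq> j \<longrightarrow> inner (e i) (e j) = 0"
    and mn: "m < n"
  defines "D \<equiv> e ` {..<n} \<union> uminus ` e ` {..<n} \<union> {u. norm u = 1 \<and> (\<forall>i<n. inner (e i) u = 0)}"
    and "f \<equiv> \<Sum>i<n. e i"
  shows "dictionary D" "OGA_realization D f m e"
    "norm (f - OGA_approx f e m) = sqrt (real (n - m))"
    "f /\<^sub>R real n \<in> A1 D" "norm f = sqrt (real n)"
proof -
  have inn: "inner (\<Sum>i\<in>I. e i) (e j) = (if j \<in> I then 1 else 0)" if "I \<subseteq> {..<n}" "j < n" for I j
    using sum_inner_e[OF on that] .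
  have eD: "e i \<in> D" if "i < n" for i using that unfolding D_def by auto
  have approx: "OGA_approx f e k = (\<Sum>i<k. e i)" if k: "k \<le> n" for k
    unfolding OGA_approx_def
  proof (rule orth_proj_eq)
    show "finite (e ` {..<k})" by simp
    show "(\<Sum>i<k. e i) \<in> span (e ` {..<k})"
      by (intro span_sum span_base) auto
    show "\<forall>v\<in>e ` {..<k}. inner (f - (\<Sum>i<k. e i)) v = 0"
    proof
      fix v assume "v \<in> e ` {..<k}"
      then obtain j where j: "j < k" "v = e j" by auto
      have "inner (f - (\<Sum>i<k. e i)) (e j) = inner f (e j) - inner (\<Sum>i<k. e i) (e j)"
        by (rule inner_diff_left)
      also have "\<dots> = 0" unfolding f_def using inn[of "{..<k}" j] inn[of "{..<n}" j] j k by simp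
      finally show "inner (f - (\<Sum>i<k. e i)) v = 0" using j by simp
    qed
  qed
  have res: "inner (f - OGA_approx f e k) (e j) = (if j < k then 0 else 1)" if "k \<le> n" "j < n" for k j
  proof -
    have "inner (f - OGA_approx f e k) (e j) = inner f (e j) - inner (\<Sum>i<k. e i) (e j)"
      unfolding approx[OF that(1)] by (rule inner_diff_left)
    also have "\<dots> = (if j < k then 0 else 1)" unfolding f_def
      using inn[of "{..<k}" j] inn[of "{..<n}" j] that by simp
    finally show ?thesis .
  qed
  show "OGA_realization D f m e"
    unfolding OGA_realization_def
  proof (intro allI impI conjI ballI)
    fix k assume k: "k < m"
    then have kn: "k < n" "k \<le> n" using mn by auto
    show "e k \<in> D" using eD kn by simp
    fix h assume h: "h \<in> D"
    have top: "inner (f - OGA_approx f e k) (e k) = 1" using res[OF kn(2) kn(1)] by simp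
    show "inner (f - OGA_approx f e k) h \<le> inner (f - OGA_approx f e k) (e k)"
      unfolding top using h unfolding D_def
    proof (elim UnE)
      assume "h \<in> e ` {..<n}"
      then obtain j where j: "j < n" "h = e j" by auto
      show "inner (f - OGA_approx f e k) h \<le> 1" using res[OF kn(2) j(1)] j by simp
    next
      assume "h \<in> uminus ` e ` {..<n}"
      then obtain j where j: "j < n" "h = - e j" by auto
      show "inner (f - OGA_approx f e k) h \<le> 1" using res[OF kn(2) j(1)] j by simp
    next
      assume "h \<in> {u. norm u = 1 \<and> (\<forall>i<n. inner (e i) u = 0)}"
      then have ho: "\<forall>i<n. inner (e i) h = 0" by simp
      have "inner (f - OGA_approx f e k) h = inner f h - inner (\<Sum>i<k. e i) h"
        unfolding approx[OF kn(2)] by (rule inner_diff_left)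
      also have "\<dots> = 0" unfolding f_def using ho kn(2)
        by (simp add: inner_sum_left)
      finally show "inner (f - OGA_approx f e k) h \<le> 1" by simp
    qed
  qed
  show "norm (f - OGA_approx f e m) = sqrt (real (n - m))"
  proof -
    have "f - OGA_approx f e m = (\<Sum>i\<in>{m..<n}. e i)"
    proof -
      have "{..<n} = {..<m} \<union> {m..<n}" using mn by auto
      then have "f = (\<Sum>i<m. e i) + (\<Sum>i\<in>{m..<n}. e i)" unfolding f_def
        by (simp add: sum.union_disjoint ivl_disj_int)
      then show ?thesis using approx[of m] mn by simp
    qed
    also have "norm \<dots> = sqrt (real (card {m..<n}))" by (rule norm_sum_e[OF on]) auto
    finally show ?thesis by simp
  qed
  show "norm f = sqrt (real n)" unfolding f_def by (subst norm_sum_e[OF on]) auto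
  show "f /\<^sub>R real n \<in> A1 D"
  proof -
    have n0: "real n > 0" using mn by simp
    have "f /\<^sub>R real n = (\<Sum>i<n. (1 / real n) *\<^sub>R e i)" unfolding f_def scaleR_sum_right
      by (simp add: inverse_eq_divide)
    also have "\<dots> \<in> convex hull D"
    proof (rule convex_sum)
      show "(\<Sum>i<n. 1 / real n) = 1" using n0 by simp
      show "\<And>i. i \<in> {..<n} \<Longrightarrow> e i \<in> convex hull D" by (rule hull_inc, rule eD) simp
    qed auto
    finally have "f /\<^sub>R real n \<in> convex hull D" .
    then show ?thesis unfolding A1_def by (rule closure_subset[THEN subsetD])
  qed
  show "dictionary D"
    unfolding dictionary_def
  proof (intro conjI ballI)
    fix g assume "g \<in> D"
    then show "norm g = 1" unfolding D_def using on(1) by auto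
  next
    fix g assume "g \<in> D"
    then show "- g \<in> D" unfolding D_def by auto
  next
    have "span D = UNIV"
    proof (rule set_eqI, rule iffI)
      fix x :: 'a
      have fin: "finite (e ` {..<n})" by simp
      define q where "q = orth_proj (span (e ` {..<n})) x"
      have q: "q \<in> span (e ` {..<n})" "\<forall>v\<in>span (e ` {..<n}). inner (x - q) v = 0"
        using orth_proj_char[OF fin, of x] unfolding q_def by auto
      have sub: "e ` {..<n} \<subseteq> D" unfolding D_def by auto
      have qD: "q \<in> span D" using q(1) span_mono[OF sub] by blast
      define y where "y = x - q"
      have yD: "y \<in> span D"
      proof (cases "y = 0")
        case True then show ?thesis by (simp add: span_zero)
      next
        case False
        have yo: "inner (e i) y = 0" if "i < n" for i
        proof -
          have "e i \<in> span (e ` {..<n})" using that by (intro span_base) auto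
          then have "inner y (e i) = 0" using q(2) by (simp add: y_def)
          then show ?thesis by (simp add: inner_commute)
        qed
        have "y /\<^sub>R norm y \<in> D" unfolding D_def using False yo by (simp add: inner_commute)
        then have "norm y *\<^sub>R (y /\<^sub>R norm y) \<in> span D" by (intro span_scale span_base)
        then show ?thesis using False by simp
      qed
      have "x = q + y" by (simp add: y_def)
      then show "x \<in> span D" using qD yD span_add by metis
    qed simp
    then show "closure (span D) = UNIV" by simp
  qed
qed



lemma A1_norm_facts:
  fixes f :: "'a::real_inner"
  assumes D: "dictionary D" and fin: "A1_norm D f < \<infinity>"
  shows "A1_norm D f = ereal (real_of_ereal (A1_norm D f))"
    "norm f \<le> real_of_ereal (A1_norm D f)"
    "\<And>M. M > 0 \<Longrightarrow> f /\<^sub>R M \<in> A1 D \<Longrightarrow> real_of_ereal (A1_norm D f) \<le> M"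
    "\<And>t. (\<And>M. M > 0 \<Longrightarrow> f /\<^sub>R M \<in> A1 D \<Longrightarrow> t \<le> M) \<Longrightarrow> t \<le> real_of_ereal (A1_norm D f)"
proof -
  define S where "S = {M. M > 0 \<and> f /\<^sub>R M \<in> A1 D}"
  have N: "A1_norm D f = Inf (ereal ` S)" unfolding A1_norm_def S_def ..
  have lb: "norm f \<le> M" if "M \<in> S" for M
  proof -
    have M: "M > 0" "f /\<^sub>R M \<in> A1 D" using that by (auto simp: S_def)
    have "norm (f /\<^sub>R M) \<le> 1" using A1_cball[OF D] M(2) by auto
    then show ?thesis using M(1) by (simp add: field_simps)
  qed
  have ge: "ereal (norm f) \<le> A1_norm D f" unfolding N
    by (rule Inf_greatest) (use lb in auto)
  have ninf: "A1_norm D f \<noteq> \<infinity>" using fin by simp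
  have nminf: "A1_norm D f \<noteq> - \<infinity>" using ge by auto
  show eq: "A1_norm D f = ereal (real_of_ereal (A1_norm D f))" using ninf nminf
    by (cases "A1_norm D f") auto
  show "norm f \<le> real_of_ereal (A1_norm D f)" using ge eq by (metis ereal_less_eq(3))
  show "real_of_ereal (A1_norm D f) \<le> M" if "M > 0" "f /\<^sub>R M \<in> A1 D" for M
  proof -
    have "M \<in> S" using that by (simp add: S_def)
    then have "A1_norm D f \<le> ereal M" unfolding N by (intro Inf_lower) auto
    then show ?thesis using eq by (metis ereal_less_eq(3))
  qed
  show "t \<le> real_of_ereal (A1_norm D f)" if "\<And>M. M > 0 \<Longrightarrow> f /\<^sub>R M \<in> A1 D \<Longrightarrow> t \<le> M" for t
  proof -
    have "ereal t \<le> A1_norm D f" unfolding N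
      by (rule Inf_greatest) (use that in \<open>auto simp: S_def\<close>)
    then show ?thesis using eq by (metis ereal_less_eq(3))
  qed
qed

lemma upper_ratio:
  fixes f :: "'a::real_inner"
  assumes D: "dictionary D" and f0: "f \<noteq> 0" and fin: "A1_norm D f < \<infinity>"
    and R: "OGA_realization D f m g" and m: "m \<ge> 1" and al: "0 < \<alpha>" "\<alpha> \<le> 1"
  shows "norm (f - OGA_approx f g m) / (norm f powr (1 - \<alpha>) * real_of_ereal (A1_norm D f) powr \<alpha>)
         \<le> real m powr (-\<alpha>/2)"
proof -
  define A where "A = real_of_ereal (A1_norm D f)"
  define x where "x = norm (f - OGA_approx f g m)"
  define P where "P = norm f powr (1 - \<alpha>)"
  define Q where "Q = real m powr (-\<alpha>/2)"
  have nf: "norm f > 0" using f0 by simp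
  have A: "norm f \<le> A" using A1_norm_facts(2)[OF D fin] unfolding A_def .
  have Apos: "A > 0" using A nf by linarith
  have P: "P > 0" using nf by (simp add: P_def)
  have Q: "Q > 0" using m by (simp add: Q_def)
  have x0: "x \<ge> 0" by (simp add: x_def)
  define c where "c = x / (P * Q)"
  have c0: "c \<ge> 0" using x0 P Q by (simp add: c_def)
  have cM: "c powr (1/\<alpha>) \<le> M" if "M > 0" "f /\<^sub>R M \<in> A1 D" for M
  proof -
    have "x \<le> P * M powr \<alpha> * Q" using upper_one[OF D R that(1) that(2) m al]
      unfolding x_def P_def Q_def .
    then have "c \<le> M powr \<alpha>" using P Q unfolding c_def by (simp add: divide_le_eq mult_ac)
    then have "c powr (1/\<alpha>) \<le> (M powr \<alpha>) powr (1/\<alpha>)" using c0 al by (intro powr_mono2) auto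
    also have "(M powr \<alpha>) powr (1/\<alpha>) = M powr (\<alpha> * (1/\<alpha>))" by (rule powr_powr)
    also have "\<alpha> * (1/\<alpha>) = 1" using al by simp
    finally show ?thesis using that(1) by simp
  qed
  have "c powr (1/\<alpha>) \<le> A" unfolding A_def by (rule A1_norm_facts(4)[OF D fin]) (rule cM)
  then have "(c powr (1/\<alpha>)) powr \<alpha> \<le> A powr \<alpha>" using al by (intro powr_mono2) auto
  moreover have "(c powr (1/\<alpha>)) powr \<alpha> = c"
  proof (cases "c = 0")
    case True then show ?thesis by simp
  next
    case False
    have "(c powr (1/\<alpha>)) powr \<alpha> = c powr (1/\<alpha> * \<alpha>)" by (rule powr_powr)
    also have "1/\<alpha> * \<alpha> = 1" using al by simp
    finally show ?thesis using False c0 by simp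
  qed
  ultimately have "c \<le> A powr \<alpha>" by simp
  then have "x \<le> A powr \<alpha> * (P * Q)" using P Q unfolding c_def by (simp add: divide_le_eq)
  then have "x / (P * A powr \<alpha>) \<le> Q" using P Apos by (simp add: divide_le_eq mult_ac)
  then show ?thesis unfolding x_def P_def Q_def A_def .
qed



lemma lower_arith:
  assumes m: "m \<ge> 1" and al: "0 < \<alpha>" "\<alpha> \<le> 1" and A: "A > 0" "A \<le> real (2*m)"
  shows "1/2 * real m powr (-\<alpha>/2) \<le> sqrt (real (2*m - m)) / (sqrt (real (2*m)) powr (1 - \<alpha>) * A powr \<alpha>)"
proof -
  define t where "t = real m"
  have t: "t > 0" using m by (simp add: t_def)
  have e1: "real (2*m - m) = t" by (simp add: t_def)
  have e2: "real (2*m) = 2 * t" by (simp add: t_def)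
  have sq: "sqrt y = y powr (1/2)" if "y \<ge> 0" for y :: real using that by (simp add: powr_half_sqrt)
  have d1: "sqrt (2*t) powr (1 - \<alpha>) = (2*t) powr ((1 - \<alpha>)/2)"
  proof -
    have "sqrt (2*t) powr (1 - \<alpha>) = ((2*t) powr (1/2)) powr (1 - \<alpha>)" using sq[of "2*t"] t by simp
    also have "\<dots> = (2*t) powr (1/2 * (1 - \<alpha>))" by (rule powr_powr)
    finally show ?thesis by simp
  qed
  have Ale: "A powr \<alpha> \<le> (2*t) powr \<alpha>" using A e2 al by (intro powr_mono2) auto
  have den: "sqrt (2*t) powr (1 - \<alpha>) * A powr \<alpha> \<le> (2*t) powr ((1 + \<alpha>)/2)"
  proof -
    have "sqrt (2*t) powr (1 - \<alpha>) * A powr \<alpha> \<le> (2*t) powr ((1 - \<alpha>)/2) * (2*t) powr \<alpha>"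
      unfolding d1 using Ale by (intro mult_left_mono) auto
    also have "\<dots> = (2*t) powr ((1 - \<alpha>)/2 + \<alpha>)" by (rule powr_add[symmetric])
    also have "(1 - \<alpha>)/2 + \<alpha> = (1 + \<alpha>)/2" by (simp add: field_simps)
    finally show ?thesis .
  qed
  have den2: "(2*t) powr ((1 + \<alpha>)/2) \<le> 2 * t powr ((1 + \<alpha>)/2)"
  proof -
    have "(2*t) powr ((1 + \<alpha>)/2) = 2 powr ((1 + \<alpha>)/2) * t powr ((1 + \<alpha>)/2)"
      using t by (intro powr_mult)
    moreover have "2 powr ((1 + \<alpha>)/2) \<le> (2::real) powr 1" using al by (intro powr_mono) auto
    ultimately show ?thesis using t by (simp add: mult_right_mono)
  qed
  have dpos: "0 < sqrt (2*t) powr (1 - \<alpha>) * A powr \<alpha>" using t A by simp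
  have "1/2 * t powr (-\<alpha>/2) = sqrt t / (2 * t powr ((1 + \<alpha>)/2))"
  proof -
    have "sqrt t / (2 * t powr ((1 + \<alpha>)/2)) = 1/2 * (t powr (1/2) / t powr ((1 + \<alpha>)/2))"
      using sq[of t] t by simp
    also have "t powr (1/2) / t powr ((1 + \<alpha>)/2) = t powr (1/2 - (1 + \<alpha>)/2)" by (rule powr_diff[symmetric])
    also have "1/2 - (1 + \<alpha>)/2 = -\<alpha>/2" by (simp add: field_simps)
    finally show ?thesis by simp
  qed
  also have "\<dots> \<le> sqrt t / (sqrt (2*t) powr (1 - \<alpha>) * A powr \<alpha>)"
    using den den2 dpos t by (intro divide_left_mono) auto
  finally show ?thesis unfolding e1 e2 t_def .
qed



theorem mainTheorem4:
  assumes "\<not> (\<exists>S::('a::{real_inner,complete_space}) set. finite S \<and> span S = UNIV)"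
    and "m \<ge> 1" and "0 < \<alpha>" and "\<alpha> \<le> 1"
  shows "ereal (1/2 * real m powr (-\<alpha>/2)) \<le> gamma_o m \<alpha> TYPE('a)
       \<and> gamma_o m \<alpha> TYPE('a) \<le> ereal (real m powr (-\<alpha>/2))"
proof
  let ?Set = "{ereal (norm (f - OGA_approx f g m) /
        (norm f powr (1 - \<alpha>) * real_of_ereal (A1_norm D f) powr \<alpha>)) | D f g.
        dictionary D \<and> (f::'a) \<noteq> 0 \<and> A1_norm D f < \<infinity> \<and> OGA_realization D f m g}"
  have G: "gamma_o m \<alpha> TYPE('a) = Sup ?Set" unfolding gamma_o_def ..
  show "gamma_o m \<alpha> TYPE('a) \<le> ereal (real m powr (-\<alpha>/2))"
    unfolding G
  proof (rule Sup_least)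
    fix z assume "z \<in> ?Set"
    then obtain D f g where z: "z = ereal (norm (f - OGA_approx f g m) /
        (norm f powr (1 - \<alpha>) * real_of_ereal (A1_norm D f) powr \<alpha>))"
      and c: "dictionary D" "(f::'a) \<noteq> 0" "A1_norm D f < \<infinity>" "OGA_realization D f m g"
      by blast
    show "z \<le> ereal (real m powr (-\<alpha>/2))" unfolding z ereal_less_eq(3)
      by (rule upper_ratio[OF c assms(2-4)])
  qed
  obtain e :: "nat \<Rightarrow> 'a" where on: "\<forall>i<2*m. norm (e i) = 1" "\<forall>i<2*m. \<forall>j<2*m. i \<noteq> j \<longrightarrow> inner (e i) (e j) = 0"
    using orthonormal_exists[OF assms(1)] by blast
  have mn: "m < 2*m" using assms(2) by simp
  define D where "D = e ` {..<2*m} \<union> uminus ` e ` {..<2*m} \<union> {u. norm u = 1 \<and> (\<forall>i<2*m. inner (e i) u = 0)}"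
  define f where "f = (\<Sum>i<2*m. e i)"
  note L = lower_example[OF on mn, folded D_def f_def]
  have nf: "norm f = sqrt (real (2*m))" using L(5) .
  have f0: "f \<noteq> 0" using nf mn by auto
  have n0: "real (2*m) > 0" using mn by simp
  have "A1_norm D f \<le> ereal (real (2*m))" unfolding A1_norm_def
    by (rule Inf_lower) (use n0 L(4) in auto)
  moreover have "ereal (real (2*m)) < \<infinity>" by simp
  ultimately have fin: "A1_norm D f < \<infinity>" by (rule order.strict_trans1)
  have Ale: "real_of_ereal (A1_norm D f) \<le> real (2*m)"
    using A1_norm_facts(3)[OF L(1) fin n0 L(4)] .
  have Age: "norm f \<le> real_of_ereal (A1_norm D f)" using A1_norm_facts(2)[OF L(1) fin] .
  have "norm f > 0" using f0 by simp
  then have Apos: "real_of_ereal (A1_norm D f) > 0" using Age by linarith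
  have mem: "ereal (norm (f - OGA_approx f e m) /
        (norm f powr (1 - \<alpha>) * real_of_ereal (A1_norm D f) powr \<alpha>)) \<in> ?Set"
  proof (rule CollectI, intro exI conjI)
  qed (rule refl L(1) L(2) f0 fin)+
  have "1/2 * real m powr (-\<alpha>/2) \<le> norm (f - OGA_approx f e m) /
        (norm f powr (1 - \<alpha>) * real_of_ereal (A1_norm D f) powr \<alpha>)"
    unfolding L(3) nf by (rule lower_arith[OF assms(2-4) Apos Ale])
  then have "ereal (1/2 * real m powr (-\<alpha>/2)) \<le> ereal (norm (f - OGA_approx f e m) /
        (norm f powr (1 - \<alpha>) * real_of_ereal (A1_norm D f) powr \<alpha>))" by simp
  also have "\<dots> \<le> Sup ?Set" by (rule Sup_upper[OF mem])
  finally show "ereal (1/2 * real m powr (-\<alpha>/2)) \<le> gamma_o m \<alpha> TYPE('a)" unfolding G .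
qed

end
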